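(* Let $R,S$ be finite nonempty sets, $k$ a positive integer, $p_r>0$ ($r\in R$), $T=\sum_{r\in R}p_r$, $d_{r,s}\ge0$, and $\kappa<0$. Let $F$ be the set of $(\mathbf x,\mathbf y)$ with $x_s,y_{r,s}\in\{0,1\}$, $\sum_{s\in S}x_s=k$, $y_{r,s}\le x_s$, and $\sum_{s\in S}y_{r,s}=1$ for all $r$. For $\mathbf y$ let $\overline{\mathcal K}(\mathbf y)=\sum_{r\in R}\sum_{s\in S}p_ry_{r,s}e^{-\kappa d_{r,s}}$ and $\mathcal K(\mathbf y)=-\frac1\kappa\ln\left(\frac1T\overline{\mathcal K}(\mathbf y)\right)$. Let $U\subseteq S$ with $|S\setminus U|\ge k$, and $c_s\ge0$ for $s\in U$; set $\sigma(\mathbf x)=\sum_{s\in U}c_sx_s$. Let $\hat{\mathcal K}\in\mathbb R$ and let $(\mathbf x^*,\mathbf y^*,v^*,q^* )$ be optimal for \[ \text{(KPL}^p)\quad \min\ \overline{\mathcal K}(\mathbf y)+Te^{-\kappa\hat{\mathcal K}}(v-1)\ \text{ s.t. } (\mathbf x,\mathbf y)\in F,\ v\ge e^{q},\ q=-\kappa\,\sigma(\mathbf x), \] with $\mathcal K^*=\mathcal K(\mathbf y^* )$. Let $(\mathbf x^{all},\mathbf y^{all})$ be optimal for (KPL)$^{all}$: $\min\{\overline{\mathcal K}(\mathbf y):(\mathbf x,\mathbf y)\in F\}$, and $(\mathbf x^{rem},\mathbf y^{rem})$ optimal for (KPL)$^{rem}$: $\min\{\overline{\mathcal K}(\mathbf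 y):(\mathbf x,\mathbf y)\in F,\ x_s=0\ \forall s\in U\}$. Let $\mathcal K^{all}=\mathcal K(\mathbf y^{all})$ and $\mathcal K^{rem}=\mathcal K(\mathbf y^{rem})$. Then \[ \mathcal K^{all}\le\mathcal K^*\le\mathcal K^{rem}. \]
   Context: (KPL)$^{all}$ is the unpenalized Kolm–Pollak linear facility location model with all potential locations; (KPL)$^{rem}$ is the same model with the penalized locations $U$ removed; the same $\kappa$ (i.e. the same scaling parameter $\alpha$, with $\kappa=\alpha\epsilon$) is used in all three models. *)

theory Defs
  imports Complex_Main
begin

definition feasF :: "'r set \<Rightarrow> 's set \<Rightarrow> nat \<Rightarrow> ('s \<Rightarrow> real) \<Rightarrow> ('r \<Rightarrow> 's \<Rightarrow> real) \<Rightarrow> bool" where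
  "feasF R S k x y \<longleftrightarrow>
     (\<forall>s\<in>S. x s \<in> {0, 1}) \<and> (\<forall>r\<in>R. \<forall>s\<in>S. y r s \<in> {0, 1}) \<and>
     (\<Sum>s\<in>S. x s) = real k \<and>
     (\<forall>r\<in>R. \<forall>s\<in>S. y r s \<le> x s) \<and>
     (\<forall>r\<in>R. (\<Sum>s\<in>S. y r s) = 1)"

definition Kbar :: "'r set \<Rightarrow> 's set \<Rightarrow> ('r \<Rightarrow> real) \<Rightarrow> ('r \<Rightarrow> 's \<Rightarrow> real) \<Rightarrow> real \<Rightarrow> ('r \<Rightarrow> 's \<Rightarrow> real) \<Rightarrow> real" where
  "Kbar R S p d \<kappa> y = (\<Sum>r\<in>R. \<Sum>s\<in>S. p r * y r s * exp (- \<kappa> * d r s))"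

definition KP :: "'r set \<Rightarrow> 's set \<Rightarrow> ('r \<Rightarrow> real) \<Rightarrow> ('r \<Rightarrow> 's \<Rightarrow> real) \<Rightarrow> real \<Rightarrow> ('r \<Rightarrow> 's \<Rightarrow> real) \<Rightarrow> real" where
  "KP R S p d \<kappa> y = - (1 / \<kappa>) * ln ((1 / (\<Sum>r\<in>R. p r)) * Kbar R S p d \<kappa> y)"

definition sigma :: "'s set \<Rightarrow> ('s \<Rightarrow> real) \<Rightarrow> ('s \<Rightarrow> real) \<Rightarrow> real" where
  "sigma U c x = (\<Sum>s\<in>U. c s * x s)"

definition feasP :: "'r set \<Rightarrow> 's set \<Rightarrow> nat \<Rightarrow> 's set \<Rightarrow> ('s \<Rightarrow> real) \<Rightarrow> real
    \<Rightarrow> ('s \<Rightarrow> real) \<Rightarrow> ('r \<Rightarrow> 's \<Rightarrow> real) \<Rightarrow> real \<Rightarrow> real \<Rightarrow> bool" where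
  "feasP R S k U c \<kappa> x y v q \<longleftrightarrow> feasF R S k x y \<and> v \<ge> exp q \<and> q = - \<kappa> * sigma U c x"

definition objP :: "'r set \<Rightarrow> 's set \<Rightarrow> ('r \<Rightarrow> real) \<Rightarrow> ('r \<Rightarrow> 's \<Rightarrow> real) \<Rightarrow> real \<Rightarrow> real
    \<Rightarrow> ('r \<Rightarrow> 's \<Rightarrow> real) \<Rightarrow> real \<Rightarrow> real" where
  "objP R S p d \<kappa> Khat y v =
     Kbar R S p d \<kappa> y + (\<Sum>r\<in>R. p r) * exp (- \<kappa> * Khat) * (v - 1)"

end

theory Submission
  imports Defs
begin

lemma Kbar_pos:
  assumes "finite R" "R \<noteq> {}" "finite S" "\<forall>r\<in>R. p r > 0" "feasF R S k x y"
  shows "Kbar R S p d \<kappa> y > 0"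
proof -
  have "\<And>r. r \<in> R \<Longrightarrow> (\<Sum>s\<in>S. p r * y r s * exp (- \<kappa> * d r s)) > 0"
  proof -
    fix r assume r: "r \<in> R"
    have y01: "\<forall>s\<in>S. y r s \<in> {0,1}" and sum1: "(\<Sum>s\<in>S. y r s) = 1"
      using assms(5) r unfolding feasF_def by auto
    obtain s where s: "s \<in> S" "y r s \<noteq> 0"
      using sum1 by (metis sum.neutral zero_neq_one)
    then have ys1: "y r s = 1" using y01 by auto
    have nn: "\<forall>t\<in>S. p r * y r t * exp (- \<kappa> * d r t) \<ge> 0"
      using y01 assms(4) r by (auto intro!: mult_nonneg_nonneg simp: less_imp_le)
    have "p r * y r s * exp (- \<kappa> * d r s) > 0" using ys1 assms(4) r by simp
    moreover have "p r * y r s * exp (- \<kappa> * d r s) \<le> (\<Sum>t\<in>S. p r * y r t * exp (- \<kappa> * d r t))"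
      by (rule member_le_sum) (use nn s assms(3) in auto)
    ultimately show "(\<Sum>s\<in>S. p r * y r s * exp (- \<kappa> * d r s)) > 0" by linarith
  qed
  then show ?thesis unfolding Kbar_def using assms(1,2) by (simp add: sum_pos)
qed

lemma KP_mono:
  assumes "finite R" "R \<noteq> {}" "\<forall>r\<in>R. p r > 0" "\<kappa> < 0"
    "Kbar R S p d \<kappa> y1 > 0" "Kbar R S p d \<kappa> y1 \<le> Kbar R S p d \<kappa> y2"
  shows "KP R S p d \<kappa> y1 \<le> KP R S p d \<kappa> y2"
proof -
  have T: "(\<Sum>r\<in>R. p r) > 0" using assms by (simp add: sum_pos)
  have "ln ((1 / (\<Sum>r\<in>R. p r)) * Kbar R S p d \<kappa> y1) \<le> ln ((1 / (\<Sum>r\<in>R. p r)) * Kbar R S p d \<kappa> y2)"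
    using T assms(5,6) by (simp add: divide_right_mono)
  moreover have "- (1 / \<kappa>) > 0" using assms(4) by simp
  ultimately show ?thesis unfolding KP_def by (metis mult_left_mono less_imp_le)
qed

theorem proposition2:
  fixes R :: "'r set" and S :: "'s set" and k :: nat
    and p :: "'r \<Rightarrow> real" and d :: "'r \<Rightarrow> 's \<Rightarrow> real" and \<kappa> :: real
    and U :: "'s set" and c :: "'s \<Rightarrow> real" and Khat :: real
    and xs :: "'s \<Rightarrow> real" and ys :: "'r \<Rightarrow> 's \<Rightarrow> real" and vs qs :: real
    and xall :: "'s \<Rightarrow> real" and yall :: "'r \<Rightarrow> 's \<Rightarrow> real"
    and xrem :: "'s \<Rightarrow> real" and yrem :: "'r \<Rightarrow> 's \<Rightarrow> real"
  assumes "finite R" "R \<noteq> {}" "finite S" "S \<noteq> {}" "k > 0"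
    and "\<forall>r\<in>R. p r > 0"
    and "\<forall>r\<in>R. \<forall>s\<in>S. d r s \<ge> 0"
    and "\<kappa> < 0"
    and "U \<subseteq> S" "card (S - U) \<ge> k"
    and "\<forall>s\<in>U. c s \<ge> 0"
    and opt_p: "feasP R S k U c \<kappa> xs ys vs qs"
      "\<forall>x y v q. feasP R S k U c \<kappa> x y v q \<longrightarrow>
          objP R S p d \<kappa> Khat ys vs \<le> objP R S p d \<kappa> Khat y v"
    and opt_all: "feasF R S k xall yall"
      "\<forall>x y. feasF R S k x y \<longrightarrow> Kbar R S p d \<kappa> yall \<le> Kbar R S p d \<kappa> y"
    and opt_rem: "feasF R S k xrem yrem" "\<forall>s\<in>U. xrem s = 0"
      "\<forall>x y. feasF R S k x y \<and> (\<forall>s\<in>U. x s = 0) \<longrightarrow> Kbar R S p d \<kappa> yrem \<le> Kbar R S p d \<kappa> y"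
  shows "KP R S p d \<kappa> yall \<le> KP R S p d \<kappa> ys \<and> KP R S p d \<kappa> ys \<le> KP R S p d \<kappa> yrem"
proof -
  have fs: "feasF R S k xs ys" using opt_p(1) unfolding feasP_def by simp
  have pos_all: "Kbar R S p d \<kappa> yall > 0" using Kbar_pos assms(1-4,6) opt_all(1) by blast
  have pos_s: "Kbar R S p d \<kappa> ys > 0" using Kbar_pos assms(1-4,6) fs by blast
  have le1: "Kbar R S p d \<kappa> yall \<le> Kbar R S p d \<kappa> ys" using opt_all(2) fs by blast
  have sig0: "sigma U c xrem = 0" unfolding sigma_def using opt_rem(2) by simp
  have "feasP R S k U c \<kappa> xrem yrem 1 0" unfolding feasP_def using opt_rem(1) sig0 by simp
  then have o: "objP R S p d \<kappa> Khat ys vs \<le> objP R S p d \<kappa> Khat yrem 1" using opt_p(2) by blast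
  have xs01: "\<forall>s\<in>S. xs s \<in> {0,1}" using fs unfolding feasF_def by simp
  have "sigma U c xs \<ge> 0" unfolding sigma_def
    using xs01 assms(9,11) by (intro sum_nonneg) (metis mult_nonneg_nonneg order.refl subsetD zero_le_one insertE empty_iff)
  then have "qs \<ge> 0" using opt_p(1) assms(8) unfolding feasP_def
    by (simp add: mult_nonpos_nonneg)
  then have "vs \<ge> 1" using opt_p(1) unfolding feasP_def
    by (meson one_le_exp_iff order_trans)
  moreover have T: "(\<Sum>r\<in>R. p r) > 0" using assms by (simp add: sum_pos)
  ultimately have "(\<Sum>r\<in>R. p r) * exp (- \<kappa> * Khat) * (vs - 1) \<ge> 0" by simp
  then have le2: "Kbar R S p d \<kappa> ys \<le> Kbar R S p d \<kappa> yrem" using o unfolding objP_def by simp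
  show ?thesis using KP_mono[OF assms(1,2,6,8) pos_all le1] KP_mono[OF assms(1,2,6,8) pos_s le2] by simp
qed

end
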